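(* Let $\mathsf X$ be a separable Hilbert space, $(\mathsf U,\mathbb U)$ a probability space with $\mathbb U$ non-atomic, $g:\mathsf X\times\mathsf U\to\mathsf X$ Borel with $\int|g(x,u)|^2d\mathbb U(u)\le L(1+|x|^2)$, and suppose $b(x)=\int g(x,u)\,d\mathbb U(u)$ is continuous and $\lambda$-dissipative. Let $(\Omega,\mathcal B,\mathbb P)$ be a standard Borel probability space, $T>0$, $J=\{T/N:N\ge1\}$, and let $(X_\tau)_{\tau\in J}$ be a Stochastic Dissipative Flow for $g$ with associated random variables $X^n_\tau$, $V^k$. For $\tau\in J$ let $\mu_{0,\tau}=(X^0_\tau)_\sharp\mathbb P$, define $\mathbf F[\mu]=(\pi^0,g)_\sharp(\mu\otimes\mathbb U)\in\mathcal P_2(\mathsf X\times\mathsf X)$ for $\mu\in\mathcal P_2(\mathsf X)$, and let $\boldsymbol\eta_\tau\in\mathcal P(\mathrm C([0,T];\mathsf X))$ be the explicit Euler path measure of $\mathbf F$ from $\mu_{0,\tau}$ with step $\tau$. Then $\boldsymbol\eta_\tau=(X_\tau)_\sharp\mathbb P$.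
   Context: $\lambda$-dissipative: $\langle x_1-x_0,b(x_1)-b(x_0)\rangle\le\lambda|x_1-x_0|^2$. $\pi^0(x,u)=x$. Stochastic Dissipative Flow for $g$: maps $X_\tau:\Omega\to\mathrm C([0,T];\mathsf X)$, $\tau\in J$, with random variables $X^n_\tau\in L^2(\Omega;\mathsf X)$ ($0\le n\le N=T/\tau$) and $V^k:\Omega\to\mathsf U$ ($k\in\mathbb N$) such that $(X^0_\tau)_{\tau\in J}$ and $(V^k)_k$ are independent, $(V^k)_\sharp\mathbb P=\mathbb U$, $X^{n+1}_\tau=X^n_\tau+\tau g(X^n_\tau,V^n)$, and $X_\tau=G\circ(X^0_\tau,\dots,X^N_\tau)$ where $G(x_0,\dots,x_N)$ is the curve affine on each $[n\tau,(n+1)\tau]\cap[0,T]$ with $\gamma(n\tau)=x_n$. Explicit Euler path measure: with $\mathsf x(x,v)=x$, $\exp^\tau(x,v)=x+\tau v$, set $M^0=\mu_{0,\tau}$, $\Phi^n=\mathbf F[M^n]$, $M^{n+1}=(\exp^\tau)_\sharp\Phi^n$; $T^n=(\mathsf x,\exp^\tau)_\sharp\Phi^n$ with disintegration $\{T^n_x\}$ w.r.t. its first marginal; $\alpha^1=T^0$, $\alpha^n=\int\delta_{(x_0,\dots,x_{n-1})}\otimes T^{n-1}_{x_{n-1}}d\alpha^{n-1}$; $\boldsymbol\eta_\tau=G_\sharp\alpha^N$. *)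

theory Defs
  imports "HOL-Probability.Probability"
begin

definition standard_borel :: "'a measure \<Rightarrow> bool" where
  "standard_borel M \<longleftrightarrow> (\<exists>X. completely_metrizable_space X \<and> separable_space X \<and>
      topspace X = space M \<and> sets M = sigma_sets (topspace X) {A. openin X A})"

definition nonatomic :: "'a measure \<Rightarrow> bool" where
  "nonatomic M \<longleftrightarrow> (\<forall>A\<in>sets M. 0 < emeasure M A \<longrightarrow>
      (\<exists>B\<in>sets M. B \<subseteq> A \<and> 0 < emeasure M B \<and> emeasure M B < emeasure M A))"

definition dissipative :: "real \<Rightarrow> ('x::real_inner \<Rightarrow> 'x) \<Rightarrow> bool" where
  "dissipative lam b \<longleftrightarrow> (\<forall>x0 x1. inner (x1 - x0) (b x1 - b x0) \<le> lam * (norm (x1 - x0))\<^sup>2)"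

definition steps :: "real \<Rightarrow> real set" where
  "steps T = {T / real N | N. N \<ge> 1}"

definition nsteps :: "real \<Rightarrow> real \<Rightarrow> nat" where
  "nsteps T \<tau> = nat \<lfloor>T / \<tau>\<rfloor>"

text \<open>C([0,T];X): continuous curves on [0,T] (as extensional functions), with the
  sigma algebra induced by the evaluation maps (which is the Borel sigma algebra of the
  sup-norm topology, X being separable).\<close>
definition curve_space :: "real \<Rightarrow> (real \<Rightarrow> 'x::topological_space) measure" where
  "curve_space T = restrict_space (PiM {0..T} (\<lambda>_. borel))
      {\<gamma> \<in> PiE {0..T} (\<lambda>_. UNIV). continuous_on {0..T} \<gamma>}"

definition interp :: "real \<Rightarrow> nat \<Rightarrow> (nat \<Rightarrow> 'x::real_vector) \<Rightarrow> (real \<Rightarrow> 'x)" where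
  "interp T N xs = (\<lambda>t\<in>{0..T}.
      let \<tau> = T / real N; n = nat \<lfloor>t / \<tau>\<rfloor> in
      if n \<ge> N then xs N else xs n + (t / \<tau> - real n) *\<^sub>R (xs (Suc n) - xs n))"

definition Fmap :: "'u measure \<Rightarrow> ('x::{real_normed_vector,second_countable_topology} \<Rightarrow> 'u \<Rightarrow> 'x)
    \<Rightarrow> 'x measure \<Rightarrow> ('x \<times> 'x) measure" where
  "Fmap U g \<mu> = distr (\<mu> \<Otimes>\<^sub>M U) (borel \<Otimes>\<^sub>M borel) (\<lambda>(x, u). (x, g x u))"

definition expt :: "real \<Rightarrow> 'x \<times> 'x \<Rightarrow> 'x::real_vector" where
  "expt \<tau> = (\<lambda>(x, v). x + \<tau> *\<^sub>R v)"

primrec eulerM :: "'u measure \<Rightarrow> ('x::{real_normed_vector,second_countable_topology} \<Rightarrow> 'u \<Rightarrow> 'x)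
    \<Rightarrow> 'x measure \<Rightarrow> real \<Rightarrow> nat \<Rightarrow> 'x measure" where
  "eulerM U g \<mu>0 \<tau> 0 = \<mu>0"
| "eulerM U g \<mu>0 \<tau> (Suc n) = distr (Fmap U g (eulerM U g \<mu>0 \<tau> n)) borel (expt \<tau>)"

definition eulerT :: "'u measure \<Rightarrow> ('x::{real_normed_vector,second_countable_topology} \<Rightarrow> 'u \<Rightarrow> 'x)
    \<Rightarrow> 'x measure \<Rightarrow> real \<Rightarrow> nat \<Rightarrow> ('x \<times> 'x) measure" where
  "eulerT U g \<mu>0 \<tau> n = distr (Fmap U g (eulerM U g \<mu>0 \<tau> n)) (borel \<Otimes>\<^sub>M borel)
      (\<lambda>(x, v). (x, expt \<tau> (x, v)))"

definition is_disintegration :: "('x::topological_space \<times> 'x) measure \<Rightarrow> ('x \<Rightarrow> 'x measure) \<Rightarrow> bool" where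
  "is_disintegration Tm K \<longleftrightarrow> K \<in> borel \<rightarrow>\<^sub>M prob_algebra borel \<and>
      Tm = distr Tm borel fst \<bind> (\<lambda>x. distr (K x) (borel \<Otimes>\<^sub>M borel) (\<lambda>y. (x, y)))"

text \<open>Tuples (x_0,...,x_n) in X^{n+1} are extensional functions on {..n}.\<close>
abbreviation tuples :: "nat \<Rightarrow> (nat \<Rightarrow> 'x::topological_space) measure" where
  "tuples n \<equiv> PiM {..n} (\<lambda>_. borel)"

fun eulerAlpha :: "(nat \<Rightarrow> ('x::topological_space \<times> 'x) measure) \<Rightarrow> (nat \<Rightarrow> 'x \<Rightarrow> 'x measure)
    \<Rightarrow> nat \<Rightarrow> (nat \<Rightarrow> 'x) measure" where
  "eulerAlpha Tm K 0 = undefined"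
| "eulerAlpha Tm K (Suc 0) =
     distr (Tm 0) (tuples 1) (\<lambda>(x, y). (\<lambda>i\<in>{..1}. if i = 0 then x else y))"
| "eulerAlpha Tm K (Suc (Suc n)) =
     eulerAlpha Tm K (Suc n) \<bind>
       (\<lambda>xs. distr (K (Suc n) (xs (Suc n))) (tuples (Suc (Suc n))) (\<lambda>y. xs(Suc (Suc n) := y)))"

text \<open>The explicit Euler path measure from mu0 with step tau = T/N, computed with a given
  choice K of disintegrations of T^0,...,T^{N-1}.\<close>
definition euler_path_measure :: "'u measure \<Rightarrow> ('x::{real_normed_vector,second_countable_topology} \<Rightarrow> 'u \<Rightarrow> 'x)
    \<Rightarrow> 'x measure \<Rightarrow> real \<Rightarrow> nat \<Rightarrow> (nat \<Rightarrow> 'x \<Rightarrow> 'x measure) \<Rightarrow> (real \<Rightarrow> 'x) measure" where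
  "euler_path_measure U g \<mu>0 T N K =
     distr (eulerAlpha (eulerT U g \<mu>0 (T / real N)) K N) (curve_space T) (interp T N)"

definition admissible_kernels :: "'u measure \<Rightarrow> ('x::{real_normed_vector,second_countable_topology} \<Rightarrow> 'u \<Rightarrow> 'x)
    \<Rightarrow> 'x measure \<Rightarrow> real \<Rightarrow> nat \<Rightarrow> (nat \<Rightarrow> 'x \<Rightarrow> 'x measure) \<Rightarrow> bool" where
  "admissible_kernels U g \<mu>0 T N K \<longleftrightarrow>
     (\<forall>n<N. is_disintegration (eulerT U g \<mu>0 (T / real N) n) (K n))"

text \<open>Stochastic Dissipative Flow for g, with its associated random variables
  Xn tau n (= X^n_tau) and V k (= V^k); Xc tau is the curve-valued map X_tau.\<close>
definition SDF :: "'w measure \<Rightarrow> 'u measure \<Rightarrow> ('x::{real_normed_vector,second_countable_topology} \<Rightarrow> 'u \<Rightarrow> 'x)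
    \<Rightarrow> real \<Rightarrow> (real \<Rightarrow> 'w \<Rightarrow> real \<Rightarrow> 'x) \<Rightarrow> (real \<Rightarrow> nat \<Rightarrow> 'w \<Rightarrow> 'x) \<Rightarrow> (nat \<Rightarrow> 'w \<Rightarrow> 'u) \<Rightarrow> bool" where
  "SDF P U g T Xc Xn V \<longleftrightarrow>
     (\<forall>\<tau>\<in>steps T. \<forall>n\<le>nsteps T \<tau>.
        Xn \<tau> n \<in> borel_measurable P \<and> integrable P (\<lambda>\<omega>. (norm (Xn \<tau> n \<omega>))\<^sup>2)) \<and>
     (\<forall>k. V k \<in> P \<rightarrow>\<^sub>M U \<and> distr P U (V k) = U) \<and>
     prob_space.indep_sets P
       (\<lambda>i. case i of
          None \<Rightarrow> {(\<lambda>\<omega>. \<lambda>\<tau>\<in>steps T. Xn \<tau> 0 \<omega>) -` A \<inter> space P | A. A \<in> sets (PiM (steps T) (\<lambda>_. borel))}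
        | Some k \<Rightarrow> {V k -` A \<inter> space P | A. A \<in> sets U}) UNIV \<and>
     (\<forall>\<tau>\<in>steps T. \<forall>n<nsteps T \<tau>. \<forall>\<omega>\<in>space P.
        Xn \<tau> (Suc n) \<omega> = Xn \<tau> n \<omega> + \<tau> *\<^sub>R g (Xn \<tau> n \<omega>) (V n \<omega>)) \<and>
     (\<forall>\<tau>\<in>steps T. \<forall>\<omega>\<in>space P.
        Xc \<tau> \<omega> = interp T (nsteps T \<tau>) (\<lambda>n. Xn \<tau> n \<omega>))"

end

theory Submission imports Defs begin

lemma bind_pair_distr:
  assumes M: "prob_space M" and U: "prob_space U" and h: "h \<in> M \<Otimes>\<^sub>M U \<rightarrow>\<^sub>M N"
  shows "M \<bind> (\<lambda>x. distr U N (\<lambda>u. h (x,u))) = distr (M \<Otimes>\<^sub>M U) N h"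
proof -
  interpret pair_prob_space M U using M U by (simp add: pair_prob_space_def pair_sigma_finite_def prob_space_imp_sigma_finite)
  have k: "(\<lambda>x. distr U N (\<lambda>u. h (x,u))) \<in> M \<rightarrow>\<^sub>M subprob_algebra N"
  proof (rule measurable_distr2)
    show "case_prod (\<lambda>x u. h (x,u)) \<in> M \<Otimes>\<^sub>M U \<rightarrow>\<^sub>M N" using h by simp
    show "(\<lambda>x. U) \<in> M \<rightarrow>\<^sub>M subprob_algebra U"
      by (rule measurable_const) (simp add: space_subprob_algebra U prob_space_imp_subprob_space)
  qed
  show ?thesis
  proof (rule measure_eqI)
    show "sets (M \<bind> (\<lambda>x. distr U N (\<lambda>u. h (x,u)))) = sets (distr (M \<Otimes>\<^sub>M U) N h)"
      using sets_bind_measurable[OF k] M1.not_empty by simp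
    fix A assume "A \<in> sets (M \<bind> (\<lambda>x. distr U N (\<lambda>u. h (x,u))))"
    then have A: "A \<in> sets N" using sets_bind_measurable[OF k] M1.not_empty by simp
    have "emeasure (M \<bind> (\<lambda>x. distr U N (\<lambda>u. h (x,u)))) A = (\<integral>\<^sup>+x. emeasure (distr U N (\<lambda>u. h (x,u))) A \<partial>M)"
      using emeasure_bind[OF M1.not_empty k A] .
    also have "\<dots> = (\<integral>\<^sup>+x. emeasure U (Pair x -` (h -` A \<inter> space (M \<Otimes>\<^sub>M U))) \<partial>M)"
      using h A by (intro nn_integral_cong) (auto simp: emeasure_distr space_pair_measure intro!: arg_cong2[where f=emeasure])
    also have "\<dots> = emeasure (M \<Otimes>\<^sub>M U) (h -` A \<inter> space (M \<Otimes>\<^sub>M U))"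
      using h A by (intro M2.emeasure_pair_measure_alt[symmetric]) auto
    also have "\<dots> = emeasure (distr (M \<Otimes>\<^sub>M U) N h) A"
      using h A by (simp add: emeasure_distr)
    finally show "emeasure (M \<bind> (\<lambda>x. distr U N (\<lambda>u. h (x,u)))) A = emeasure (distr (M \<Otimes>\<^sub>M U) N h) A" .
  qed
qed


lemma countable_generator:
  obtains G :: "'x::second_countable_topology set set" where "countable G" "Int_stable G"
    "UNIV \<in> G" "sets borel = sigma_sets UNIV G"
proof -
  obtain B :: "'x set set" where B: "countable B" "topological_basis B" using ex_countable_basis by blast
  define G where "G = Inter ` {b. finite b \<and> b \<subseteq> B}"
  have "countable G" unfolding G_def by (intro countable_image countable_Collect_finite_subset B)
  moreover have "Int_stable G"
    unfolding Int_stable_def G_def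
  proof (safe)
    fix b1 b2 assume "finite b1" "b1 \<subseteq> B" "finite b2" "b2 \<subseteq> B"
    then show "\<Inter> b1 \<inter> \<Inter> b2 \<in> Inter ` {b. finite b \<and> b \<subseteq> B}"
      by (intro image_eqI[of _ _ "b1 \<union> b2"]) auto
  qed
  moreover have "UNIV \<in> G" unfolding G_def by (intro image_eqI[of _ _ "{}"]) auto
  moreover have "sets borel = sigma_sets UNIV G"
  proof
    have sb: "sets (borel::'x measure) = sigma_sets UNIV B"
    proof -
      have "sets (sigma UNIV B) = sigma_sets UNIV B" by (rule sets_measure_of) simp
      then show ?thesis using borel_eq_countable_basis[OF B] by simp
    qed
    have "B \<subseteq> G" unfolding G_def by (auto intro!: image_eqI[of _ Inter "{b}" for b])
    then show "sets borel \<subseteq> sigma_sets UNIV G" unfolding sb by (rule sigma_sets_mono')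
    have "G \<subseteq> sets borel"
      unfolding G_def using B(2) by (auto intro!: borel_open open_Inter dest: topological_basis_open)
    then have "G \<subseteq> sigma_sets UNIV B" using sb by simp
    then show "sigma_sets UNIV G \<subseteq> sets borel" unfolding sb by (rule sigma_sets_mono)
  qed
  ultimately show ?thesis using that by blast
qed

lemma kernel_ae_unique:
  fixes M :: "'x::second_countable_topology measure" and K K' :: "'x \<Rightarrow> 'x measure"
  assumes M: "prob_space M" and sM: "sets M = sets borel"
    and K: "K \<in> borel \<rightarrow>\<^sub>M prob_algebra borel" and K': "K' \<in> borel \<rightarrow>\<^sub>M prob_algebra borel"
    and eq: "M \<bind> (\<lambda>x. distr (K x) (borel \<Otimes>\<^sub>M borel) (\<lambda>y. (x, y)))
           = M \<bind> (\<lambda>x. distr (K' x) (borel \<Otimes>\<^sub>M borel) (\<lambda>y. (x, y)))"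
  shows "AE x in M. K x = K' x"
proof -
  interpret prob_space M by fact
  have KM: "K \<in> M \<rightarrow>\<^sub>M subprob_algebra borel" "K' \<in> M \<rightarrow>\<^sub>M subprob_algebra borel"
    using measurable_prob_algebraD[OF K] measurable_prob_algebraD[OF K']
    by (simp_all add: measurable_cong_sets[OF sM refl])
  have kk: "(\<lambda>x. distr (L x) (borel \<Otimes>\<^sub>M borel) (\<lambda>y. (x, y))) \<in> M \<rightarrow>\<^sub>M subprob_algebra (borel \<Otimes>\<^sub>M borel)"
    if "L \<in> M \<rightarrow>\<^sub>M subprob_algebra borel" for L :: "'x \<Rightarrow> 'x measure"
  proof (rule measurable_distr2[OF _ that])
    show "(\<lambda>(x, y). (x, y)) \<in> M \<Otimes>\<^sub>M borel \<rightarrow>\<^sub>M borel \<Otimes>\<^sub>M borel"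
      by (simp add: measurable_cong_sets[OF sets_pair_measure_cong[OF sM refl] refl])
  qed
  have sK: "sets (K x) = sets borel" "sets (K' x) = sets borel" if "x \<in> space M" for x
    using sets_kernel[OF KM(1) that] sets_kernel[OF KM(2) that] by auto
  have emb: "emeasure (M \<bind> (\<lambda>x. distr (L x) (borel \<Otimes>\<^sub>M borel) (\<lambda>y. (x, y)))) (A \<times> B)
      = (\<integral>\<^sup>+x. emeasure (L x) B * indicator A x \<partial>M)"
    if L: "L \<in> M \<rightarrow>\<^sub>M subprob_algebra borel" and A: "A \<in> sets borel" and B: "B \<in> sets borel" for L :: "'x \<Rightarrow> 'x measure" and A B
  proof -
    have "emeasure (M \<bind> (\<lambda>x. distr (L x) (borel \<Otimes>\<^sub>M borel) (\<lambda>y. (x, y)))) (A \<times> B)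
        = (\<integral>\<^sup>+x. emeasure (distr (L x) (borel \<Otimes>\<^sub>M borel) (\<lambda>y. (x, y))) (A \<times> B) \<partial>M)"
      using A B by (intro emeasure_bind[OF not_empty kk[OF L]]) auto
    also have "\<dots> = (\<integral>\<^sup>+x. emeasure (L x) B * indicator A x \<partial>M)"
    proof (intro nn_integral_cong)
      fix x assume x: "x \<in> space M"
      have sL: "sets (L x) = sets borel" using sets_kernel[OF L x] .
      have m: "(\<lambda>y. (x, y)) \<in> L x \<rightarrow>\<^sub>M borel \<Otimes>\<^sub>M borel"
        by (simp add: measurable_cong_sets[OF sL refl])
      have sp: "space (L x) = UNIV" using sets_eq_imp_space_eq[OF sL] by simp
      show "emeasure (distr (L x) (borel \<Otimes>\<^sub>M borel) (\<lambda>y. (x, y))) (A \<times> B) = emeasure (L x) B * indicator A x"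
        using A B by (subst emeasure_distr[OF m]) (auto simp: sp split: split_indicator)
    qed
    finally show ?thesis .
  qed
  have aeB: "AE x in M. emeasure (K x) B = emeasure (K' x) B" if B: "B \<in> sets borel" for B
  proof (rule density_unique)
    show "(\<lambda>x. emeasure (K x) B) \<in> borel_measurable M" "(\<lambda>x. emeasure (K' x) B) \<in> borel_measurable M"
      using KM B by (auto intro: measurable_emeasure_subprob_algebra)
    show "density M (\<lambda>x. emeasure (K x) B) = density M (\<lambda>x. emeasure (K' x) B)"
    proof (rule measure_eqI)
      fix A assume "A \<in> sets (density M (\<lambda>x. emeasure (K x) B))"
      then have A: "A \<in> sets M" by simp
      have A': "A \<in> sets borel" using A sM by simp
      show "emeasure (density M (\<lambda>x. emeasure (K x) B)) A = emeasure (density M (\<lambda>x. emeasure (K' x) B)) A"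
        using emb[of K A B] emb[of K' A B] eq KM B A A'
        by (simp add: emeasure_density measurable_emeasure_subprob_algebra)
    qed simp
  qed
  obtain G :: "'x set set" where G: "countable G" "Int_stable G" "UNIV \<in> G" "sets borel = sigma_sets UNIV G"
    by (rule countable_generator)
  have "AE x in M. \<forall>B\<in>G. emeasure (K x) B = emeasure (K' x) B"
    using G(1) by (subst AE_ball_countable) (auto intro!: aeB simp: G(4) intro: sigma_sets.Basic)
  then show ?thesis
  proof (rule AE_mp[OF _ AE_I2], safe)
    fix x assume x: "x \<in> space M" and e: "\<forall>B\<in>G. emeasure (K x) B = emeasure (K' x) B"
    have pK: "prob_space (K x)" "prob_space (K' x)"
      using measurable_space[OF K, of x] measurable_space[OF K', of x] x sM
      by (auto simp: space_prob_algebra sets_eq_imp_space_eq[OF sM])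
    show "K x = K' x"
    proof (rule measure_eqI_generator_eq_countable[of G UNIV _ _ "{UNIV}"])
      have sp: "space (K x) = UNIV" using sets_eq_imp_space_eq[OF sK(1)[OF x]] by simp
      show "\<And>a. a \<in> {UNIV} \<Longrightarrow> emeasure (K x) a \<noteq> \<infinity>"
        using prob_space.emeasure_space_1[OF pK(1)] sp by simp
    qed (use G e sK[OF x] in auto)
  qed
qed


definition K0 :: "'u measure \<Rightarrow> ('x::{real_normed_vector,second_countable_topology} \<Rightarrow> 'u \<Rightarrow> 'x) \<Rightarrow> real \<Rightarrow> 'x \<Rightarrow> 'x measure" where
  "K0 U g \<tau> x = distr U borel (\<lambda>u. x + \<tau> *\<^sub>R g x u)"

lemma meas_step:
  fixes g :: "'x::{real_normed_vector,second_countable_topology} \<Rightarrow> 'u \<Rightarrow> 'x"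
  assumes gm: "(\<lambda>(x, u). g x u) \<in> borel_measurable (borel \<Otimes>\<^sub>M U)" and sM: "sets M = sets borel"
  shows "(\<lambda>(x, u). x + \<tau> *\<^sub>R g x u) \<in> borel_measurable (M \<Otimes>\<^sub>M U)"
    "(\<lambda>(x, u). (x, x + \<tau> *\<^sub>R g x u)) \<in> M \<Otimes>\<^sub>M U \<rightarrow>\<^sub>M borel \<Otimes>\<^sub>M borel"
    "(\<lambda>(x, u). (x, g x u)) \<in> M \<Otimes>\<^sub>M U \<rightarrow>\<^sub>M borel \<Otimes>\<^sub>M borel"
proof -
  have gm': "(\<lambda>(x, u). g x u) \<in> borel_measurable (M \<Otimes>\<^sub>M U)"
    using gm by (simp add: measurable_cong_sets[OF sets_pair_measure_cong[OF sM refl] refl])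
  have fm: "fst \<in> borel_measurable (M \<Otimes>\<^sub>M U)"
    using measurable_fst[of M U] by (simp add: measurable_cong_sets[OF refl sM])
  have "(\<lambda>p. fst p + \<tau> *\<^sub>R (case p of (x, u) \<Rightarrow> g x u)) \<in> borel_measurable (M \<Otimes>\<^sub>M U)"
    using fm gm' by measurable
  then show 1: "(\<lambda>(x, u). x + \<tau> *\<^sub>R g x u) \<in> borel_measurable (M \<Otimes>\<^sub>M U)"
    by (simp add: case_prod_beta')
  show "(\<lambda>(x, u). (x, x + \<tau> *\<^sub>R g x u)) \<in> M \<Otimes>\<^sub>M U \<rightarrow>\<^sub>M borel \<Otimes>\<^sub>M borel"
    using measurable_Pair[OF fm 1] by (simp add: case_prod_beta')
  show "(\<lambda>(x, u). (x, g x u)) \<in> M \<Otimes>\<^sub>M U \<rightarrow>\<^sub>M borel \<Otimes>\<^sub>M borel"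
    using measurable_Pair[OF fm gm'] by (simp add: case_prod_beta')
qed

lemma eulerM_props:
  fixes g :: "'x::{real_normed_vector,second_countable_topology} \<Rightarrow> 'u \<Rightarrow> 'x"
  assumes U: "prob_space U" and gm: "(\<lambda>(x, u). g x u) \<in> borel_measurable (borel \<Otimes>\<^sub>M U)"
    and P0: "prob_space \<mu>0" and s0: "sets \<mu>0 = sets borel"
  shows "prob_space (eulerM U g \<mu>0 \<tau> n) \<and> sets (eulerM U g \<mu>0 \<tau> n) = sets borel"
proof (induction n)
  case 0 then show ?case using P0 s0 by simp
next
  case (Suc n)
  let ?M = "eulerM U g \<mu>0 \<tau> n"
  have pp: "prob_space (?M \<Otimes>\<^sub>M U)" using Suc U by (simp add: prob_space_pair)
  have "prob_space (Fmap U g ?M)" unfolding Fmap_def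
    by (rule prob_space.prob_space_distr[OF pp meas_step(3)[OF gm]]) (use Suc in simp)
  moreover have "expt \<tau> \<in> Fmap U g ?M \<rightarrow>\<^sub>M borel"
  proof -
    have "expt \<tau> \<in> borel \<Otimes>\<^sub>M borel \<rightarrow>\<^sub>M (borel :: 'x measure)" unfolding expt_def by measurable
    then show ?thesis using measurable_cong_sets[of "Fmap U g ?M" "borel \<Otimes>\<^sub>M borel" borel borel]
      by (simp add: Fmap_def)
  qed
  ultimately show ?case by (simp add: prob_space.prob_space_distr)
qed

lemma eulerT_eq:
  fixes g :: "'x::{real_normed_vector,second_countable_topology} \<Rightarrow> 'u \<Rightarrow> 'x"
  assumes U: "prob_space U" and gm: "(\<lambda>(x, u). g x u) \<in> borel_measurable (borel \<Otimes>\<^sub>M U)"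
    and s: "sets (eulerM U g \<mu>0 \<tau> n) = sets borel"
  shows "eulerT U g \<mu>0 \<tau> n = distr (eulerM U g \<mu>0 \<tau> n \<Otimes>\<^sub>M U) (borel \<Otimes>\<^sub>M borel) (\<lambda>(x, u). (x, x + \<tau> *\<^sub>R g x u))"
proof -
  have m2: "(\<lambda>(x, v). (x, expt \<tau> (x, v))) \<in> (borel \<Otimes>\<^sub>M borel) \<rightarrow>\<^sub>M (borel \<Otimes>\<^sub>M (borel :: 'x measure))"
    unfolding expt_def by measurable
  show ?thesis
    unfolding eulerT_def Fmap_def
    by (subst distr_distr[OF m2 meas_step(3)[OF gm s]]) (simp add: comp_def expt_def case_prod_beta')
qed

lemma eulerM_Suc_eq:
  fixes g :: "'x::{real_normed_vector,second_countable_topology} \<Rightarrow> 'u \<Rightarrow> 'x"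
  assumes U: "prob_space U" and gm: "(\<lambda>(x, u). g x u) \<in> borel_measurable (borel \<Otimes>\<^sub>M U)"
    and s: "sets (eulerM U g \<mu>0 \<tau> n) = sets borel"
  shows "eulerM U g \<mu>0 \<tau> (Suc n) = distr (eulerM U g \<mu>0 \<tau> n \<Otimes>\<^sub>M U) borel (\<lambda>(x, u). x + \<tau> *\<^sub>R g x u)"
proof -
  have m2: "expt \<tau> \<in> (borel \<Otimes>\<^sub>M borel) \<rightarrow>\<^sub>M (borel :: 'x measure)"
    unfolding expt_def by measurable
  show ?thesis
    unfolding eulerM.simps Fmap_def
    by (subst distr_distr[OF m2 meas_step(3)[OF gm s]]) (simp add: comp_def expt_def case_prod_beta')
qed

lemma K0_measurable:
  fixes g :: "'x::{real_normed_vector,second_countable_topology} \<Rightarrow> 'u \<Rightarrow> 'x"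
  assumes U: "prob_space U" and gm: "(\<lambda>(x, u). g x u) \<in> borel_measurable (borel \<Otimes>\<^sub>M U)"
  shows "K0 U g \<tau> \<in> borel \<rightarrow>\<^sub>M prob_algebra borel"
  unfolding K0_def
proof (rule measurable_distr_prob_space2)
  show "(\<lambda>x. U) \<in> borel \<rightarrow>\<^sub>M prob_algebra U"
    by (rule measurable_const) (simp add: space_prob_algebra U)
  show "(\<lambda>(x, u). x + \<tau> *\<^sub>R g x u) \<in> borel \<Otimes>\<^sub>M U \<rightarrow>\<^sub>M borel"
    using meas_step(1)[OF gm refl] .
qed

lemma K0_disint:
  fixes g :: "'x::{real_normed_vector,second_countable_topology} \<Rightarrow> 'u \<Rightarrow> 'x"
  assumes U: "prob_space U" and gm: "(\<lambda>(x, u). g x u) \<in> borel_measurable (borel \<Otimes>\<^sub>M U)"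
    and P: "prob_space (eulerM U g \<mu>0 \<tau> n)" and s: "sets (eulerM U g \<mu>0 \<tau> n) = sets borel"
  shows "is_disintegration (eulerT U g \<mu>0 \<tau> n) (K0 U g \<tau>)"
    and "distr (eulerT U g \<mu>0 \<tau> n) borel fst = eulerM U g \<mu>0 \<tau> n"
proof -
  let ?M = "eulerM U g \<mu>0 \<tau> n"
  interpret pair_prob_space ?M U using P U by (simp add: pair_prob_space_def pair_sigma_finite_def prob_space_imp_sigma_finite)
  have fm: "fst \<in> borel \<Otimes>\<^sub>M borel \<rightarrow>\<^sub>M (borel :: 'x measure)" by measurable
  show fst_eq: "distr (eulerT U g \<mu>0 \<tau> n) borel fst = ?M"
  proof -
    have "distr (eulerT U g \<mu>0 \<tau> n) borel fst = distr (?M \<Otimes>\<^sub>M U) borel (fst \<circ> (\<lambda>(x, u). (x, x + \<tau> *\<^sub>R g x u)))"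
      unfolding eulerT_eq[OF U gm s] by (rule distr_distr[OF fm meas_step(2)[OF gm s]])
    also have "\<dots> = distr (?M \<Otimes>\<^sub>M U) ?M fst"
      by (rule distr_cong) (auto simp: s)
    also have "\<dots> = ?M" by (rule M2.distr_pair_fst)
    finally show ?thesis .
  qed
  have "?M \<bind> (\<lambda>x. distr (K0 U g \<tau> x) (borel \<Otimes>\<^sub>M borel) (\<lambda>y. (x, y)))
      = ?M \<bind> (\<lambda>x. distr U (borel \<Otimes>\<^sub>M borel) (\<lambda>u. (\<lambda>(x, u). (x, x + \<tau> *\<^sub>R g x u)) (x, u)))"
  proof (rule bind_cong)
    fix x assume x: "x \<in> space ?M"
    have m1: "(\<lambda>u. x + \<tau> *\<^sub>R g x u) \<in> U \<rightarrow>\<^sub>M borel"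
      using measurable_Pair2[OF meas_step(1)[OF gm refl], of x] by simp
    show "distr (K0 U g \<tau> x) (borel \<Otimes>\<^sub>M borel) (\<lambda>y. (x, y)) = distr U (borel \<Otimes>\<^sub>M borel) (\<lambda>u. (\<lambda>(x, u). (x, x + \<tau> *\<^sub>R g x u)) (x, u))"
      unfolding K0_def by (subst distr_distr[OF _ m1]) (auto simp: comp_def)
  qed simp
  also have "\<dots> = distr (?M \<Otimes>\<^sub>M U) (borel \<Otimes>\<^sub>M borel) (\<lambda>(x, u). (x, x + \<tau> *\<^sub>R g x u))"
    by (rule bind_pair_distr[OF P U meas_step(2)[OF gm s]])
  finally show "is_disintegration (eulerT U g \<mu>0 \<tau> n) (K0 U g \<tau>)"
    unfolding is_disintegration_def fst_eq using K0_measurable[OF U gm] eulerT_eq[OF U gm s] by simp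
qed


definition hinterp :: "nat \<Rightarrow> (nat \<Rightarrow> 'x::real_vector) \<Rightarrow> real \<Rightarrow> 'x" where
  "hinterp N xs s = xs 0 + (\<Sum>k<N. max 0 (min 1 (s - real k)) *\<^sub>R (xs (Suc k) - xs k))"

lemma hinterp_eq:
  fixes xs :: "nat \<Rightarrow> 'x::real_vector"
  assumes s: "0 \<le> s" "s \<le> real N"
  shows "hinterp N xs s = (if nat \<lfloor>s\<rfloor> \<ge> N then xs N
           else xs (nat \<lfloor>s\<rfloor>) + (s - real (nat \<lfloor>s\<rfloor>)) *\<^sub>R (xs (Suc (nat \<lfloor>s\<rfloor>)) - xs (nat \<lfloor>s\<rfloor>)))"
proof -
  define n where "n = nat \<lfloor>s\<rfloor>"
  have n1: "real n \<le> s" "s < real n + 1" using s unfolding n_def by linarith+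
  define F where "F k = max 0 (min 1 (s - real k)) *\<^sub>R (xs (Suc k) - xs k)" for k
  have tel: "(\<Sum>k<m. xs (Suc k) - xs k) = xs m - xs 0" for m
    by (rule sum_lessThan_telescope)
  show ?thesis
  proof (cases "n \<ge> N")
    case True
    then have "(\<Sum>k<N. F k) = (\<Sum>k<N. xs (Suc k) - xs k)"
      using n1 s by (intro sum.cong) (auto simp: F_def)
    then show ?thesis using True unfolding hinterp_def F_def[symmetric] n_def[symmetric] tel by simp
  next
    case False
    have "(\<Sum>k<N. F k) = (\<Sum>k<n. F k) + (\<Sum>k=n..<N. F k)"
      using False by (metis le_less_linear less_imp_le_nat lessThan_atLeast0 sum.atLeastLessThan_concat zero_le)
    also have "(\<Sum>k=n..<N. F k) = F n + (\<Sum>k=Suc n..<N. F k)"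
      using False by (intro sum.atLeast_Suc_lessThan) simp
    also have "(\<Sum>k=Suc n..<N. F k) = 0"
    proof (intro sum.neutral ballI)
      fix k assume "k \<in> {Suc n..<N}"
      then have "s - real k \<le> 0" using n1 by auto
      then show "F k = 0" by (simp add: F_def)
    qed
    also have "(\<Sum>k<n. F k) = (\<Sum>k<n. xs (Suc k) - xs k)"
    proof (intro sum.cong refl)
      fix k assume "k \<in> {..<n}"
      then have "s - real k \<ge> 1" using n1 by auto
      then show "F k = xs (Suc k) - xs k" by (simp add: F_def)
    qed
    also have "F n = (s - real n) *\<^sub>R (xs (Suc n) - xs n)"
      using n1 by (simp add: F_def)
    finally show ?thesis using False unfolding hinterp_def F_def[symmetric] n_def[symmetric] tel by simp
  qed
qed

lemma interp_alt:
  fixes xs :: "nat \<Rightarrow> 'x::real_vector"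
  assumes T: "T > 0" and N: "N \<ge> 1" and t: "t \<in> {0..T}"
  shows "interp T N xs t = hinterp N xs (t / (T / real N))"
proof -
  have "0 \<le> t / (T / real N)" using t T N by auto
  moreover have "t / (T / real N) \<le> real N" using t T N by (auto simp: field_simps)
  ultimately show ?thesis using t unfolding interp_def Let_def by (simp add: hinterp_eq)
qed

lemma interp_cont:
  fixes xs :: "nat \<Rightarrow> 'x::real_normed_vector"
  assumes T: "T > 0" and N: "N \<ge> 1"
  shows "continuous_on {0..T} (interp T N xs)"
proof -
  have "continuous_on {0..T} (\<lambda>t. hinterp N xs (t / (T / real N)))"
    unfolding hinterp_def using T N by (intro continuous_intros) auto
  moreover have "\<And>t. t \<in> {0..T} \<Longrightarrow> interp T N xs t = hinterp N xs (t / (T / real N))"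
    using interp_alt[OF T N] by blast
  ultimately show ?thesis using continuous_on_cong[of "{0..T}" "{0..T}" "interp T N xs"] by simp
qed

lemma interp_cong:
  assumes "\<And>n. n \<le> N \<Longrightarrow> xs n = ys n"
  shows "interp T N xs = interp T N ys"
  unfolding interp_def Let_def using assms by (intro restrict_ext) auto

lemma interp_meas:
  fixes T :: real
  assumes T: "T > 0" and N: "N \<ge> 1"
  shows "(interp T N :: (nat \<Rightarrow> 'x::{real_normed_vector,second_countable_topology}) \<Rightarrow> _) \<in> tuples N \<rightarrow>\<^sub>M curve_space T"
  unfolding curve_space_def
proof (rule measurable_restrict_space2)
  show "(interp T N :: (nat \<Rightarrow> 'x) \<Rightarrow> _) \<in> space (tuples N) \<rightarrow> {\<gamma> \<in> PiE {0..T} (\<lambda>_. UNIV). continuous_on {0..T} \<gamma>}"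
  proof (rule Pi_I)
    fix xs :: "nat \<Rightarrow> 'x"
    have ext: "interp T N xs \<in> extensional {0..T}" unfolding interp_def by (rule restrict_extensional)
    show "interp T N xs \<in> {\<gamma> \<in> PiE {0..T} (\<lambda>_. UNIV). continuous_on {0..T} \<gamma>}"
      using ext interp_cont[OF T N, of xs] by (simp add: PiE_iff)
  qed
  show "(interp T N :: (nat \<Rightarrow> 'x) \<Rightarrow> _) \<in> tuples N \<rightarrow>\<^sub>M PiM {0..T} (\<lambda>_. borel)"
    unfolding interp_def
  proof (rule measurable_restrict)
    fix t :: real
    show "(\<lambda>xs :: nat \<Rightarrow> 'x. let \<tau> = T / real N; n = nat \<lfloor>t / \<tau>\<rfloor>
        in if N \<le> n then xs N else xs n + (t / \<tau> - real n) *\<^sub>R (xs (Suc n) - xs n)) \<in> borel_measurable (tuples N)"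
      unfolding Let_def
      by (cases "N \<le> nat \<lfloor>t / (T / real N)\<rfloor>") (simp_all add: measurable_component_singleton borel_measurable_add
          borel_measurable_diff borel_measurable_scaleR)
  qed
qed


locale sdfctx =
  fixes P :: "'w measure" and U :: "'u measure"
    and g :: "'x::{real_normed_vector,second_countable_topology} \<Rightarrow> 'u \<Rightarrow> 'x"
    and T :: real and Xc :: "real \<Rightarrow> 'w \<Rightarrow> real \<Rightarrow> 'x" and Xn :: "real \<Rightarrow> nat \<Rightarrow> 'w \<Rightarrow> 'x"
    and V :: "nat \<Rightarrow> 'w \<Rightarrow> 'u" and \<tau> :: real
  assumes U: "prob_space U" and gm: "(\<lambda>(x, u). g x u) \<in> borel_measurable (borel \<Otimes>\<^sub>M U)"
    and PP: "prob_space P" and Tpos: "T > 0" and sdf: "SDF P U g T Xc Xn V" and tau: "\<tau> \<in> steps T"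
begin

definition N where "N = nsteps T \<tau>"

lemma N_props: "N \<ge> 1" "\<tau> = T / real N" "\<tau> > 0"
proof -
  obtain M where M: "\<tau> = T / real M" "M \<ge> 1" using tau unfolding steps_def by auto
  have "T / \<tau> = real M" using M Tpos by (auto simp: field_simps)
  then have "N = M" unfolding N_def nsteps_def by simp
  then show "N \<ge> 1" "\<tau> = T / real N" "\<tau> > 0" using M Tpos by auto
qed

abbreviation X where "X n \<equiv> Xn \<tau> n"

definition Y :: "nat \<Rightarrow> 'w \<Rightarrow> nat \<Rightarrow> 'x" where "Y m \<omega> = (\<lambda>n\<in>{..m}. X n \<omega>)"

definition Z where "Z = (\<lambda>\<omega>. \<lambda>\<tau>\<in>steps T. Xn \<tau> 0 \<omega>)"

definition E where "E = (\<lambda>i. case i of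
          None \<Rightarrow> {Z -` A \<inter> space P | A. A \<in> sets (PiM (steps T) (\<lambda>_. borel))}
        | Some k \<Rightarrow> {V k -` A \<inter> space P | A. A \<in> sets U})"

lemma Xm: "n \<le> N \<Longrightarrow> X n \<in> borel_measurable P"
  and Xm0: "t \<in> steps T \<Longrightarrow> Xn t 0 \<in> borel_measurable P"
  and Vm: "V k \<in> P \<rightarrow>\<^sub>M U" and Vd: "distr P U (V k) = U"
  and ind: "prob_space.indep_sets P E UNIV"
  and rec: "n < N \<Longrightarrow> \<omega> \<in> space P \<Longrightarrow> X (Suc n) \<omega> = X n \<omega> + \<tau> *\<^sub>R g (X n \<omega>) (V n \<omega>)"
  and Xc_eq: "\<omega> \<in> space P \<Longrightarrow> Xc \<tau> \<omega> = interp T N (\<lambda>n. X n \<omega>)"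
proof -
  note s = sdf[unfolded SDF_def]
  show "n \<le> N \<Longrightarrow> X n \<in> borel_measurable P" using conjunct1[OF s] tau unfolding N_def by blast
  show "t \<in> steps T \<Longrightarrow> Xn t 0 \<in> borel_measurable P" using conjunct1[OF s] by blast
  show "V k \<in> P \<rightarrow>\<^sub>M U" "distr P U (V k) = U" using conjunct1[OF conjunct2[OF s]] by blast+
  show "prob_space.indep_sets P E UNIV" using conjunct1[OF conjunct2[OF conjunct2[OF s]]] unfolding E_def Z_def .
  show "n < N \<Longrightarrow> \<omega> \<in> space P \<Longrightarrow> X (Suc n) \<omega> = X n \<omega> + \<tau> *\<^sub>R g (X n \<omega>) (V n \<omega>)"
    using conjunct1[OF conjunct2[OF conjunct2[OF conjunct2[OF s]]]] tau unfolding N_def by blast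
  show "\<omega> \<in> space P \<Longrightarrow> Xc \<tau> \<omega> = interp T N (\<lambda>n. X n \<omega>)"
    using conjunct2[OF conjunct2[OF conjunct2[OF conjunct2[OF s]]]] tau unfolding N_def by blast
qed

lemma Ym: "m \<le> N \<Longrightarrow> Y m \<in> P \<rightarrow>\<^sub>M tuples m"
  unfolding Y_def by (rule measurable_restrict) (auto intro: Xm)

lemma Zm: "Z \<in> P \<rightarrow>\<^sub>M PiM (steps T) (\<lambda>_. borel)"
  unfolding Z_def by (rule measurable_restrict) (auto intro: Xm0)

lemma gcomp:
  assumes "f \<in> M \<rightarrow>\<^sub>M borel" "h \<in> M \<rightarrow>\<^sub>M U"
  shows "(\<lambda>\<omega>. f \<omega> + \<tau> *\<^sub>R g (f \<omega>) (h \<omega>)) \<in> borel_measurable M"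
proof -
  have "(\<lambda>\<omega>. (\<lambda>(x, u). g x u) (f \<omega>, h \<omega>)) \<in> borel_measurable M"
    by (rule measurable_compose[OF measurable_Pair[OF assms] gm])
  then show ?thesis using assms(1) by simp
qed

lemma Int_stable_vimage: "Int_stable {f -` A \<inter> S | A. A \<in> sets M}"
  unfolding Int_stable_def
proof (safe)
  fix A B assume "A \<in> sets M" "B \<in> sets M"
  then show "\<exists>C. f -` A \<inter> S \<inter> (f -` B \<inter> S) = f -` C \<inter> S \<and> C \<in> sets M"
    by (intro exI[of _ "A \<inter> B"]) auto
qed

lemma indepY:
  assumes m: "m < N"
  shows "prob_space.indep_set P (sigma_sets (space P) {Y m -` A \<inter> space P | A. A \<in> sets (tuples m)})
                  (sigma_sets (space P) {V m -` A \<inter> space P | A. A \<in> sets U})"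
proof -
  interpret prob_space P by (rule PP)
  define I where "I = case_bool (insert None (Some ` {..<m})) {Some m}"
  have Esub: "E i \<subseteq> Pow (space P)" for i unfolding E_def by (auto split: option.split)
  have coll: "indep_sets (\<lambda>j. sigma_sets (space P) (\<Union>i\<in>I j. E i)) UNIV"
  proof (rule indep_sets_collect_sigma)
    show "indep_sets E (\<Union>j\<in>UNIV. I j)" by (rule indep_sets_mono_index[OF _ ind]) simp
    show "Int_stable (E i)" for i
      by (cases i) (simp_all add: E_def Int_stable_vimage)
    show "disjoint_family_on I UNIV"
      unfolding disjoint_family_on_def I_def by (auto split: bool.split)
  qed
  define Q where "Q = sigma (space P) (\<Union>i\<in>I True. E i)"
  have sQ: "sets Q = sigma_sets (space P) (\<Union>i\<in>I True. E i)" and spQ: "space Q = space P"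
    unfolding Q_def using Esub by (auto intro!: sets_measure_of space_measure_of)
  have ZQ: "Z \<in> Q \<rightarrow>\<^sub>M PiM (steps T) (\<lambda>_. borel)"
  proof (rule measurableI)
    show "Z x \<in> space (PiM (steps T) (\<lambda>_. borel))" for x
      unfolding Z_def by (simp add: space_PiM)
    fix A :: "(real \<Rightarrow> 'x) set" assume "A \<in> sets (PiM (steps T) (\<lambda>_. borel))"
    then have "Z -` A \<inter> space P \<in> E None" unfolding E_def by auto
    then show "Z -` A \<inter> space Q \<in> sets Q" unfolding sQ spQ I_def by (auto intro: sigma_sets.Basic)
  qed
  have VQ: "V k \<in> Q \<rightarrow>\<^sub>M U" if "k < m" for k
  proof (rule measurableI)
    show "V k x \<in> space U" if "x \<in> space Q" for x using measurable_space[OF Vm] that spQ by auto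
    fix A assume "A \<in> sets U"
    then have "V k -` A \<inter> space P \<in> E (Some k)" unfolding E_def by auto
    then show "V k -` A \<inter> space Q \<in> sets Q" unfolding sQ spQ I_def using that by (auto intro: sigma_sets.Basic)
  qed
  have XQ: "k \<le> m \<Longrightarrow> X k \<in> borel_measurable Q" for k
  proof (induction k)
    case 0
    have "(\<lambda>\<omega>. Z \<omega> \<tau>) \<in> borel_measurable Q"
      using measurable_compose[OF ZQ measurable_component_singleton[OF tau]] by simp
    then show ?case by (rule measurable_cong[THEN iffD1, rotated]) (simp add: Z_def tau)
  next
    case (Suc k)
    have "(\<lambda>\<omega>. X k \<omega> + \<tau> *\<^sub>R g (X k \<omega>) (V k \<omega>)) \<in> borel_measurable Q"
      using Suc by (intro gcomp VQ) auto
    then show ?case using Suc m by (subst measurable_cong[where g="\<lambda>\<omega>. X k \<omega> + \<tau> *\<^sub>R g (X k \<omega>) (V k \<omega>)"]) (auto simp: spQ rec)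
  qed
  have YQ: "Y m \<in> Q \<rightarrow>\<^sub>M tuples m"
    unfolding Y_def by (rule measurable_restrict) (auto intro: XQ)
  have sub1: "{Y m -` A \<inter> space P | A. A \<in> sets (tuples m)} \<subseteq> sigma_sets (space P) (\<Union>i\<in>I True. E i)"
    using measurable_sets[OF YQ] unfolding sQ spQ by auto
  show "indep_set (sigma_sets (space P) {Y m -` A \<inter> space P | A. A \<in> sets (tuples m)})
                  (sigma_sets (space P) {V m -` A \<inter> space P | A. A \<in> sets U})"
    unfolding indep_set_def
  proof (rule indep_sets_mono_sets[OF coll])
    fix b :: bool
    show "case_bool (sigma_sets (space P) {Y m -` A \<inter> space P | A. A \<in> sets (tuples m)})
                  (sigma_sets (space P) {V m -` A \<inter> space P | A. A \<in> sets U}) b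
          \<subseteq> sigma_sets (space P) (\<Union>i\<in>I b. E i)"
      using sigma_sets_mono[OF sub1] by (cases b) (auto simp: I_def E_def)
  qed
qed

lemma indep_joint:
  assumes m: "m < N" and f: "f \<in> P \<rightarrow>\<^sub>M M'"
    and sub: "{f -` A \<inter> space P | A. A \<in> sets M'} \<subseteq> sigma_sets (space P) {Y m -` A \<inter> space P | A. A \<in> sets (tuples m)}"
  shows "distr P (M' \<Otimes>\<^sub>M U) (\<lambda>\<omega>. (f \<omega>, V m \<omega>)) = distr P M' f \<Otimes>\<^sub>M U"
proof -
  interpret prob_space P by (rule PP)
  note ind = indepY[OF m]
  have pf: "prob_space (distr P M' f)" using f by (rule prob_space_distr)
  show ?thesis
  proof (rule pair_measure_eqI[symmetric])
    show "sigma_finite_measure (distr P M' f)" "sigma_finite_measure U"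
      using pf U by (auto intro: prob_space_imp_sigma_finite)
    show "sets (distr P M' f \<Otimes>\<^sub>M U) = sets (distr P (M' \<Otimes>\<^sub>M U) (\<lambda>\<omega>. (f \<omega>, V m \<omega>)))"
      using sets_pair_measure_cong[of "distr P M' f" M' U U] by simp
    fix A B assume A: "A \<in> sets (distr P M' f)" and B: "B \<in> sets U"
    then have A': "A \<in> sets M'" by simp
    have pm: "(\<lambda>\<omega>. (f \<omega>, V m \<omega>)) \<in> P \<rightarrow>\<^sub>M M' \<Otimes>\<^sub>M U" by (rule measurable_Pair[OF f Vm])
    have a: "f -` A \<inter> space P \<in> sigma_sets (space P) {Y m -` A \<inter> space P | A. A \<in> sets (tuples m)}"
      using sub A' by blast
    have b: "V m -` B \<inter> space P \<in> sigma_sets (space P) {V m -` A \<inter> space P | A. A \<in> sets U}"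
      using B by (blast intro: sigma_sets.Basic)
    have ev: "f -` A \<inter> space P \<in> events" "V m -` B \<inter> space P \<in> events"
      using measurable_sets[OF f A'] measurable_sets[OF Vm B] by auto
    have eqs: "(\<lambda>\<omega>. (f \<omega>, V m \<omega>)) -` (A \<times> B) \<inter> space P = (f -` A \<inter> space P) \<inter> (V m -` B \<inter> space P)"
      by auto
    have "emeasure (distr P (M' \<Otimes>\<^sub>M U) (\<lambda>\<omega>. (f \<omega>, V m \<omega>))) (A \<times> B)
        = emeasure P ((f -` A \<inter> space P) \<inter> (V m -` B \<inter> space P))"
      using A' B by (subst emeasure_distr[OF pm]) (auto simp: eqs)
    also have "\<dots> = ennreal (prob (f -` A \<inter> space P) * prob (V m -` B \<inter> space P))"
      using indep_setD[OF ind a b] ev by (simp add: emeasure_eq_measure Int_absorb)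
    also have "\<dots> = emeasure (distr P M' f) A * emeasure U B"
    proof -
      have "emeasure U B = emeasure (distr P U (V m)) B" by (simp add: Vd)
      also have "\<dots> = emeasure P (V m -` B \<inter> space P)" using B by (simp add: emeasure_distr[OF Vm])
      finally have eU: "emeasure U B = emeasure P (V m -` B \<inter> space P)" .
      have eA: "emeasure (distr P M' f) A = emeasure P (f -` A \<inter> space P)"
        using A' by (simp add: emeasure_distr[OF f])
      show ?thesis unfolding eU eA using ev
        by (simp add: emeasure_eq_measure ennreal_mult)
    qed
    finally show "emeasure (distr P M' f) A * emeasure U B = emeasure (distr P (M' \<Otimes>\<^sub>M U) (\<lambda>\<omega>. (f \<omega>, V m \<omega>))) (A \<times> B)"
      by simp
  qed
qed

lemma jointY: "m < N \<Longrightarrow> distr P (tuples m \<Otimes>\<^sub>M U) (\<lambda>\<omega>. (Y m \<omega>, V m \<omega>)) = distr P (tuples m) (Y m) \<Otimes>\<^sub>M U"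
  by (rule indep_joint) (auto intro: Ym sigma_sets.Basic)

lemma jointX: "m < N \<Longrightarrow> distr P (borel \<Otimes>\<^sub>M U) (\<lambda>\<omega>. (X m \<omega>, V m \<omega>)) = distr P borel (X m) \<Otimes>\<^sub>M U"
proof (rule indep_joint)
  assume m: "m < N"
  then show "X m \<in> borel_measurable P" by (intro Xm) simp
  show "{X m -` A \<inter> space P |A. A \<in> sets borel} \<subseteq> sigma_sets (space P) {Y m -` A \<inter> space P |A. A \<in> sets (tuples m)}"
  proof (intro subsetI sigma_sets.Basic, safe)
    fix A :: "'x set" assume A: "A \<in> sets borel"
    have "X m -` A \<inter> space P = Y m -` ((\<lambda>xs. xs m) -` A \<inter> space (tuples m)) \<inter> space P"
      using measurable_space[OF Ym[of m]] m by (auto simp: Y_def)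
    moreover have "(\<lambda>xs. xs m) -` A \<inter> space (tuples m) \<in> sets (tuples m)"
      using A by (intro measurable_sets[OF measurable_component_singleton]) auto
    ultimately show "\<exists>B. X m -` A \<inter> space P = Y m -` B \<inter> space P \<and> B \<in> sets (tuples m)" by blast
  qed
qed

end


context sdfctx begin

definition mu0 where "mu0 = distr P borel (X 0)"

lemma mu0_props: "prob_space mu0" "sets mu0 = sets borel"
  unfolding mu0_def using Xm[of 0] by (auto intro: prob_space.prob_space_distr[OF PP])

lemma eM_props: "prob_space (eulerM U g mu0 \<tau> n)" "sets (eulerM U g mu0 \<tau> n) = sets borel"
  using eulerM_props[OF U gm mu0_props] by auto

lemma M_eq: "n \<le> N \<Longrightarrow> eulerM U g mu0 \<tau> n = distr P borel (X n)"
proof (induction n)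
  case 0 then show ?case by (simp add: mu0_def)
next
  case (Suc n)
  then have n: "n < N" by simp
  have pm: "(\<lambda>\<omega>. (X n \<omega>, V n \<omega>)) \<in> P \<rightarrow>\<^sub>M borel \<Otimes>\<^sub>M U"
    using n by (intro measurable_Pair Xm Vm) simp
  have "eulerM U g mu0 \<tau> (Suc n) = distr (eulerM U g mu0 \<tau> n \<Otimes>\<^sub>M U) borel (\<lambda>(x, u). x + \<tau> *\<^sub>R g x u)"
    by (rule eulerM_Suc_eq[OF U gm eM_props(2)])
  also have "\<dots> = distr (distr P (borel \<Otimes>\<^sub>M U) (\<lambda>\<omega>. (X n \<omega>, V n \<omega>))) borel (\<lambda>(x, u). x + \<tau> *\<^sub>R g x u)"
    using Suc n by (simp add: jointX)
  also have "\<dots> = distr P borel ((\<lambda>(x, u). x + \<tau> *\<^sub>R g x u) \<circ> (\<lambda>\<omega>. (X n \<omega>, V n \<omega>)))"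
    by (rule distr_distr[OF meas_step(1)[OF gm refl] pm])
  also have "\<dots> = distr P borel (X (Suc n))"
    by (rule distr_cong) (auto simp: rec n)
  finally show ?case .
qed

lemma kern_meas:
  fixes L :: "'x \<Rightarrow> 'x measure"
  assumes L: "L \<in> borel \<rightarrow>\<^sub>M prob_algebra borel"
  shows "(\<lambda>xs. distr (L (xs m)) (tuples (Suc m)) (\<lambda>y. xs(Suc m := y))) \<in> tuples m \<rightarrow>\<^sub>M subprob_algebra (tuples (Suc m))"
proof (rule measurable_distr2)
  show "(\<lambda>(xs, y). xs(Suc m := y)) \<in> tuples m \<Otimes>\<^sub>M borel \<rightarrow>\<^sub>M (tuples (Suc m) :: (nat \<Rightarrow> 'x) measure)"
    using measurable_add_dim[of "Suc m" "{..m}" "\<lambda>_. borel :: 'x measure"] by (simp add: atMost_Suc)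
  show "(\<lambda>xs. L (xs m)) \<in> tuples m \<rightarrow>\<^sub>M subprob_algebra borel"
    using measurable_compose[OF measurable_component_singleton[of m "{..m}" "\<lambda>_. borel :: 'x measure"] measurable_prob_algebraD[OF L]]
    by simp
qed

lemma h_meas:
  "(\<lambda>(xs, u). xs(Suc m := xs m + \<tau> *\<^sub>R g (xs m) u)) \<in> tuples m \<Otimes>\<^sub>M U \<rightarrow>\<^sub>M (tuples (Suc m) :: (nat \<Rightarrow> 'x) measure)"
proof -
  have a: "(\<lambda>(xs, y). xs(Suc m := y)) \<in> tuples m \<Otimes>\<^sub>M borel \<rightarrow>\<^sub>M (tuples (Suc m) :: (nat \<Rightarrow> 'x) measure)"
    using measurable_add_dim[of "Suc m" "{..m}" "\<lambda>_. borel :: 'x measure"] by (simp add: atMost_Suc)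
  have c: "(\<lambda>p. (fst p m, snd p)) \<in> tuples m \<Otimes>\<^sub>M U \<rightarrow>\<^sub>M (borel :: 'x measure) \<Otimes>\<^sub>M U"
    by (intro measurable_Pair measurable_compose[OF measurable_fst measurable_component_singleton] measurable_snd) simp
  have b: "(\<lambda>p. (\<lambda>(x, u). x + \<tau> *\<^sub>R g x u) (fst p m, snd p)) \<in> borel_measurable (tuples m \<Otimes>\<^sub>M U)"
    by (rule measurable_compose[OF c meas_step(1)[OF gm refl]])
  have d: "(\<lambda>p. (fst p, (\<lambda>(x, u). x + \<tau> *\<^sub>R g x u) (fst p m, snd p))) \<in> tuples m \<Otimes>\<^sub>M U \<rightarrow>\<^sub>M tuples m \<Otimes>\<^sub>M borel"
    by (rule measurable_Pair[OF measurable_fst b])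
  show ?thesis using measurable_compose[OF d a] by (simp add: case_prod_beta')
qed

lemma alpha_eq:
  assumes K: "admissible_kernels U g mu0 T N K"
  shows "1 \<le> m \<Longrightarrow> m \<le> N \<Longrightarrow> eulerAlpha (eulerT U g mu0 \<tau>) K m = distr P (tuples m) (Y m)"
proof (induction m rule: nat_induct_at_least)
  case base
  have N0: "0 < N" using N_props by simp
  have pm: "(\<lambda>\<omega>. (X 0 \<omega>, V 0 \<omega>)) \<in> P \<rightarrow>\<^sub>M borel \<Otimes>\<^sub>M U"
    by (intro measurable_Pair Xm Vm) simp
  define G :: "'x \<times> 'x \<Rightarrow> nat \<Rightarrow> 'x" where "G = (\<lambda>p. \<lambda>i\<in>{..1}. if i = 0 then fst p else snd p)"
  have Gm: "G \<in> borel \<Otimes>\<^sub>M borel \<rightarrow>\<^sub>M tuples 1"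
    unfolding G_def
  proof (rule measurable_restrict)
    fix i :: nat
    show "(\<lambda>p. if i = 0 then fst p else snd p) \<in> borel \<Otimes>\<^sub>M borel \<rightarrow>\<^sub>M (borel :: 'x measure)"
      by (cases "i = 0") simp_all
  qed
  have "eulerT U g mu0 \<tau> 0 = distr (eulerM U g mu0 \<tau> 0 \<Otimes>\<^sub>M U) (borel \<Otimes>\<^sub>M borel) (\<lambda>(x, u). (x, x + \<tau> *\<^sub>R g x u))"
    by (rule eulerT_eq[OF U gm eM_props(2)])
  also have "\<dots> = distr (distr P (borel \<Otimes>\<^sub>M U) (\<lambda>\<omega>. (X 0 \<omega>, V 0 \<omega>))) (borel \<Otimes>\<^sub>M borel) (\<lambda>(x, u). (x, x + \<tau> *\<^sub>R g x u))"
    using N0 by (simp add: jointX mu0_def)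
  also have "\<dots> = distr P (borel \<Otimes>\<^sub>M borel) ((\<lambda>(x, u). (x, x + \<tau> *\<^sub>R g x u)) \<circ> (\<lambda>\<omega>. (X 0 \<omega>, V 0 \<omega>)))"
    by (rule distr_distr[OF meas_step(2)[OF gm refl] pm])
  finally have T0: "eulerT U g mu0 \<tau> 0 = distr P (borel \<Otimes>\<^sub>M borel) ((\<lambda>(x, u). (x, x + \<tau> *\<^sub>R g x u)) \<circ> (\<lambda>\<omega>. (X 0 \<omega>, V 0 \<omega>)))" .
  have pm2: "(\<lambda>(x, u). (x, x + \<tau> *\<^sub>R g x u)) \<circ> (\<lambda>\<omega>. (X 0 \<omega>, V 0 \<omega>)) \<in> P \<rightarrow>\<^sub>M borel \<Otimes>\<^sub>M borel"
    by (rule measurable_comp[OF pm meas_step(2)[OF gm refl]])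
  have "eulerAlpha (eulerT U g mu0 \<tau>) K 1 = distr (eulerT U g mu0 \<tau> 0) (tuples 1) G"
    by (simp add: G_def case_prod_beta')
  also have "\<dots> = distr P (tuples 1) (G \<circ> ((\<lambda>(x, u). (x, x + \<tau> *\<^sub>R g x u)) \<circ> (\<lambda>\<omega>. (X 0 \<omega>, V 0 \<omega>))))"
    unfolding T0 by (rule distr_distr[OF Gm pm2])
  also have "\<dots> = distr P (tuples 1) (Y 1)"
  proof (rule distr_cong)
    fix \<omega> assume w: "\<omega> \<in> space P"
    show "(G \<circ> ((\<lambda>(x, u). (x, x + \<tau> *\<^sub>R g x u)) \<circ> (\<lambda>\<omega>. (X 0 \<omega>, V 0 \<omega>)))) \<omega> = Y 1 \<omega>"
      unfolding G_def Y_def using rec[OF N0 w] by (auto simp: fun_eq_iff le_Suc_eq)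
  qed simp_all
  finally show ?case by simp
next
  case (Suc m)
  then have m: "m < N" "1 \<le> m" by auto
  have IH: "eulerAlpha (eulerT U g mu0 \<tau>) K m = distr P (tuples m) (Y m)" using Suc by simp
  have alpha_Suc: "eulerAlpha (eulerT U g mu0 \<tau>) K (Suc m) = eulerAlpha (eulerT U g mu0 \<tau>) K m \<bind>
       (\<lambda>xs. distr (K m (xs m)) (tuples (Suc m)) (\<lambda>y. xs(Suc m := y)))"
    using m(2) by (cases m) auto
  have Kd: "is_disintegration (eulerT U g mu0 \<tau> m) (K m)"
    using K m N_props unfolding admissible_kernels_def by simp
  note K0d = K0_disint[OF U gm eM_props]
  have Kmeas: "K m \<in> borel \<rightarrow>\<^sub>M prob_algebra borel" using Kd unfolding is_disintegration_def by simp
  have K0meas: "K0 U g \<tau> \<in> borel \<rightarrow>\<^sub>M prob_algebra borel" by (rule K0_measurable[OF U gm])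
  have "AE x in eulerM U g mu0 \<tau> m. K m x = K0 U g \<tau> x"
  proof (rule kernel_ae_unique[OF eM_props Kmeas K0meas])
    show "eulerM U g mu0 \<tau> m \<bind> (\<lambda>x. distr (K m x) (borel \<Otimes>\<^sub>M borel) (Pair x)) =
          eulerM U g mu0 \<tau> m \<bind> (\<lambda>x. distr (K0 U g \<tau> x) (borel \<Otimes>\<^sub>M borel) (Pair x))"
      using Kd K0d(1)[of m] K0d(2)[of m] unfolding is_disintegration_def by metis
  qed
  then have ae1: "AE x in distr (distr P (tuples m) (Y m)) borel (\<lambda>xs. xs m). K m x = K0 U g \<tau> x"
  proof -
    have "distr (distr P (tuples m) (Y m)) borel (\<lambda>xs. xs m) = distr P borel ((\<lambda>xs. xs m) \<circ> Y m)"
      by (rule distr_distr[OF measurable_component_singleton Ym]) (use m in auto)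
    also have "\<dots> = distr P borel (X m)" by (rule distr_cong) (auto simp: Y_def)
    also have "\<dots> = eulerM U g mu0 \<tau> m" using M_eq[of m] m by simp
    finally have e: "distr (distr P (tuples m) (Y m)) borel (\<lambda>xs. xs m) = eulerM U g mu0 \<tau> m" .
    show ?thesis unfolding e by fact
  qed
  have ae: "AE xs in distr P (tuples m) (Y m). K m (xs m) = K0 U g \<tau> (xs m)"
    by (rule AE_distrD[OF _ ae1]) simp
  have sY: "sets (distr P (tuples m) (Y m)) = sets (tuples m)" by simp
  have pY: "prob_space (distr P (tuples m) (Y m))"
    using Ym[of m] m by (intro prob_space.prob_space_distr[OF PP]) auto
  have "eulerAlpha (eulerT U g mu0 \<tau>) K (Suc m) = distr P (tuples m) (Y m) \<bind>
       (\<lambda>xs. distr (K0 U g \<tau> (xs m)) (tuples (Suc m)) (\<lambda>y. xs(Suc m := y)))"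
    unfolding alpha_Suc IH
    by (rule bind_cong_AE[OF refl _ _ ae[THEN AE_mp, OF AE_I2]])
       (auto simp: measurable_cong_sets[OF sY refl] intro!: kern_meas Kmeas K0meas)
  also have "\<dots> = distr P (tuples m) (Y m) \<bind>
       (\<lambda>xs. distr U (tuples (Suc m)) (\<lambda>u. (\<lambda>(xs, u). xs(Suc m := xs m + \<tau> *\<^sub>R g (xs m) u)) (xs, u)))"
  proof (rule bind_cong[OF refl])
    fix xs assume xs0: "xs \<in> space (distr P (tuples m) (Y m))"
    then have xs: "xs \<in> space (tuples m)" by simp
    have m1: "(\<lambda>u. xs m + \<tau> *\<^sub>R g (xs m) u) \<in> U \<rightarrow>\<^sub>M borel"
      using measurable_Pair2[OF meas_step(1)[OF gm refl], of "xs m"] by simp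
    have m2: "(\<lambda>y. xs(Suc m := y)) \<in> borel \<rightarrow>\<^sub>M (tuples (Suc m) :: (nat \<Rightarrow> 'x) measure)"
      using measurable_Pair2[OF measurable_add_dim[of "Suc m" "{..m}" "\<lambda>_. borel :: 'x measure"] xs]
      by (simp add: atMost_Suc)
    show "distr (K0 U g \<tau> (xs m)) (tuples (Suc m)) (\<lambda>y. xs(Suc m := y)) =
          distr U (tuples (Suc m)) (\<lambda>u. (\<lambda>(xs, u). xs(Suc m := xs m + \<tau> *\<^sub>R g (xs m) u)) (xs, u))"
      unfolding K0_def by (subst distr_distr[OF m2 m1]) (simp_all add: comp_def)
  qed
  also have "\<dots> = distr (distr P (tuples m) (Y m) \<Otimes>\<^sub>M U) (tuples (Suc m)) (\<lambda>(xs, u). xs(Suc m := xs m + \<tau> *\<^sub>R g (xs m) u))"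
    by (rule bind_pair_distr[OF pY U]) (simp add: measurable_cong_sets[OF sets_pair_measure_cong[OF sY refl] refl] h_meas)
  also have "\<dots> = distr (distr P (tuples m \<Otimes>\<^sub>M U) (\<lambda>\<omega>. (Y m \<omega>, V m \<omega>))) (tuples (Suc m)) (\<lambda>(xs, u). xs(Suc m := xs m + \<tau> *\<^sub>R g (xs m) u))"
    using jointY[OF m(1)] by simp
  also have "\<dots> = distr P (tuples (Suc m)) ((\<lambda>(xs, u). xs(Suc m := xs m + \<tau> *\<^sub>R g (xs m) u)) \<circ> (\<lambda>\<omega>. (Y m \<omega>, V m \<omega>)))"
    by (rule distr_distr[OF h_meas measurable_Pair[OF Ym Vm]]) (use m in simp)
  also have "\<dots> = distr P (tuples (Suc m)) (Y (Suc m))"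
  proof (rule distr_cong)
    fix \<omega> assume w: "\<omega> \<in> space P"
    show "((\<lambda>(xs, u). xs(Suc m := xs m + \<tau> *\<^sub>R g (xs m) u)) \<circ> (\<lambda>\<omega>. (Y m \<omega>, V m \<omega>))) \<omega> = Y (Suc m) \<omega>"
      unfolding Y_def using rec[OF m(1) w] by (auto simp: fun_eq_iff le_Suc_eq)
  qed simp_all
  finally show ?case .
qed

end


theorem proposition6p4:
  fixes U :: "'u measure" and g :: "'x::{real_inner,banach,second_countable_topology} \<Rightarrow> 'u \<Rightarrow> 'x"
    and L lam T :: real and P :: "'w measure"
    and Xc :: "real \<Rightarrow> 'w \<Rightarrow> real \<Rightarrow> 'x" and Xn :: "real \<Rightarrow> nat \<Rightarrow> 'w \<Rightarrow> 'x"
    and V :: "nat \<Rightarrow> 'w \<Rightarrow> 'u"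
  assumes "prob_space U" and "nonatomic U"
    and "(\<lambda>(x, u). g x u) \<in> borel_measurable (borel \<Otimes>\<^sub>M U)"
    and "\<And>x. (\<integral>\<^sup>+ u. ennreal ((norm (g x u))\<^sup>2) \<partial>U) \<le> ennreal (L * (1 + (norm x)\<^sup>2))"
    and "continuous_on UNIV (\<lambda>x. \<integral> u. g x u \<partial>U)"
    and "dissipative lam (\<lambda>x. \<integral> u. g x u \<partial>U)"
    and "prob_space P" and "standard_borel P"
    and "T > 0"
    and "SDF P U g T Xc Xn V"
    and "\<tau> \<in> steps T"
  shows "(\<exists>K. admissible_kernels U g (distr P borel (Xn \<tau> 0)) T (nsteps T \<tau>) K) \<and>
         (\<forall>K. admissible_kernels U g (distr P borel (Xn \<tau> 0)) T (nsteps T \<tau>) K \<longrightarrow>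
            euler_path_measure U g (distr P borel (Xn \<tau> 0)) T (nsteps T \<tau>) K
              = distr P (curve_space T) (Xc \<tau>))"
proof -
  interpret sdfctx P U g T Xc Xn V \<tau>
    by (rule sdfctx.intro[OF assms(1,3,7,9,10,11)])
  have Neq: "nsteps T \<tau> = N" by (simp add: N_def)
  have mu: "distr P borel (Xn \<tau> 0) = mu0" by (simp add: mu0_def)
  have tauN: "T / real N = \<tau>" using N_props by simp
  show ?thesis unfolding Neq mu
  proof (intro conjI allI impI)
    show "\<exists>K. admissible_kernels U g mu0 T N K"
      by (rule exI[of _ "\<lambda>_. K0 U g \<tau>"])
         (simp add: admissible_kernels_def tauN K0_disint(1)[OF U gm eM_props])
    fix K assume K: "admissible_kernels U g mu0 T N K"
    have "euler_path_measure U g mu0 T N K = distr (eulerAlpha (eulerT U g mu0 \<tau>) K N) (curve_space T) (interp T N)"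
      unfolding euler_path_measure_def tauN ..
    also have "\<dots> = distr (distr P (tuples N) (Y N)) (curve_space T) (interp T N)"
      using alpha_eq[OF K, of N] N_props by simp
    also have "\<dots> = distr P (curve_space T) (interp T N \<circ> Y N)"
      by (rule distr_distr[OF interp_meas[OF Tpos N_props(1)] Ym]) simp
    also have "\<dots> = distr P (curve_space T) (Xc \<tau>)"
    proof (rule distr_cong)
      fix \<omega> assume w: "\<omega> \<in> space P"
      show "(interp T N \<circ> Y N) \<omega> = Xc \<tau> \<omega>"
        unfolding Xc_eq[OF w] comp_def by (rule interp_cong) (simp add: Y_def)
    qed simp_all
    finally show "euler_path_measure U g mu0 T N K = distr P (curve_space T) (Xc \<tau>)" .
  qed
qed

end
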